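(* For each $\epsilon>0$ there exists $N$ such that for every $n\geq N$ and every connected finite simple graph $G$ of order $n$ (with at least one edge), $$\mathrm{es}_{\Delta}(G)\leq\left(\frac{5}{9}+\epsilon\right)n.$$
   Context: $\mathrm{es}_{\Delta}(G)$ is the minimum number of edges of $G$ whose removal results in a subgraph with maximum degree $\Delta(G)-1$. All graphs are finite, simple, and have at least one edge. *)

theory Defs
  imports Complex_Main
begin

definition simple_graph :: "'a set \<Rightarrow> 'a set set \<Rightarrow> bool" where
  "simple_graph V E \<longleftrightarrow> finite V \<and>
     (\<forall>e\<in>E. \<exists>u v. u \<in> V \<and> v \<in> V \<and> u \<noteq> v \<and> e = {u, v})"

definition degree :: "'a set set \<Rightarrow> 'a \<Rightarrow> nat" where
  "degree E v = card {e \<in> E. v \<in> e}"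

definition max_degree :: "'a set \<Rightarrow> 'a set set \<Rightarrow> nat" where
  "max_degree V E = Max (degree E ` V)"

definition adj :: "'a set set \<Rightarrow> 'a \<Rightarrow> 'a \<Rightarrow> bool" where
  "adj E u v \<longleftrightarrow> {u, v} \<in> E"

definition connected_graph :: "'a set \<Rightarrow> 'a set set \<Rightarrow> bool" where
  "connected_graph V E \<longleftrightarrow> V \<noteq> {} \<and>
     (\<forall>u\<in>V. \<forall>v\<in>V. (adj E)\<^sup>*\<^sup>* u v)"

definition es_Delta :: "'a set \<Rightarrow> 'a set set \<Rightarrow> nat" where
  "es_Delta V E = Min {card F | F. F \<subseteq> E \<and> max_degree V (E - F) = max_degree V E - 1}"

end

theory Submission
  imports Defs
begin

locale sg =
  fixes E :: "'a set set"
  assumes finE: "finite E"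
    and two: "\<forall>e\<in>E. \<exists>u v. u \<noteq> v \<and> e = {u, v}"
begin

definition matching :: "'a set \<Rightarrow> 'a set set \<Rightarrow> bool" where
  "matching W M \<longleftrightarrow> M \<subseteq> E \<and> (\<forall>e\<in>M. e \<subseteq> W) \<and> (\<forall>e1\<in>M. \<forall>e2\<in>M. e1 \<noteq> e2 \<longrightarrow> e1 \<inter> e2 = {})"

definition nu :: "'a set \<Rightarrow> nat" where
  "nu W = Max (card ` {M. matching W M})"

definition radj :: "'a set \<Rightarrow> 'a \<Rightarrow> 'a \<Rightarrow> bool" where
  "radj W u v \<longleftrightarrow> u \<in> W \<and> v \<in> W \<and> {u, v} \<in> E"

definition comp :: "'a set \<Rightarrow> 'a \<Rightarrow> 'a set" where
  "comp W v = {u. (radj W)\<^sup>*\<^sup>* v u}"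

definition comps :: "'a set \<Rightarrow> 'a set set" where
  "comps W = comp W ` W"

definition oddc :: "'a set \<Rightarrow> nat" where
  "oddc W = card {C \<in> comps W. odd (card C)}"

lemma fin_matchings: "finite {M. matching W M}"
proof -
  have "{M. matching W M} \<subseteq> Pow E" by (auto simp: matching_def)
  then show ?thesis using finE finite_subset by blast
qed

lemma matching_empty: "matching W {}"
  by (simp add: matching_def)

lemma card_le_nu: "matching W M \<Longrightarrow> card M \<le> nu W"
  unfolding nu_def using fin_matchings by (auto intro: Max_ge)

lemma ex_max: "\<exists>M. matching W M \<and> card M = nu W"
proof -
  have "nu W \<in> card ` {M. matching W M}"
    unfolding nu_def using fin_matchings matching_empty by (intro Max_in) auto
  then show ?thesis by auto
qed

lemma matching_fin: "matching W M \<Longrightarrow> finite M"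
  using finE finite_subset by (auto simp: matching_def)

lemma edge_card: "e \<in> E \<Longrightarrow> card e = 2"
  using two by fastforce

lemma edge_fin: "e \<in> E \<Longrightarrow> finite e"
  using two by fastforce

lemma card_Union_matching: "matching W M \<Longrightarrow> card (\<Union>M) = 2 * card M"
proof -
  assume m: "matching W M"
  have "card (\<Union>M) = sum card M"
    apply (rule card_Union_disjoint)
    using m by (auto simp: pairwise_def disjnt_def matching_def intro: edge_fin)
  also have "\<dots> = sum (\<lambda>_. 2) M"
    using m by (intro sum.cong) (auto simp: matching_def intro: edge_card)
  finally show ?thesis by simp
qed

lemma matching_Union_fin: "matching W M \<Longrightarrow> finite (\<Union>M)"
  using matching_fin[of W M] by (auto simp: matching_def intro: edge_fin)

lemma augment:
  assumes m: "matching W M" and e: "e \<in> E" "e \<subseteq> W" "e \<inter> \<Union>M = {}"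
  shows "matching W (insert e M)" "card (insert e M) = Suc (card M)"
proof -
  show "matching W (insert e M)"
    using m e by (auto simp: matching_def)
  have "e \<noteq> {}" using e(1) two by fastforce
  then have "e \<notin> M" using e(3) by auto
  then show "card (insert e M) = Suc (card M)"
    using matching_fin[OF m] by simp
qed

lemma augment_contra:
  assumes m: "matching W M" "card M = nu W" and e: "e \<in> E" "e \<subseteq> W" "e \<inter> \<Union>M = {}"
  shows False
  using augment[OF m(1) e] card_le_nu m(2) by fastforce


lemma edge_neq: "{u, w} \<in> E \<Longrightarrow> u \<noteq> w"
  using edge_card[of "{u,w}"] by auto

lemma gallai:
  assumes allmiss: "\<forall>v\<in>W. \<exists>N. matching W N \<and> card N = nu W \<and> v \<notin> \<Union>N"
  shows "matching W M \<Longrightarrow> card M = nu W \<Longrightarrow> u \<in> W \<Longrightarrow> v \<in> W \<Longrightarrow> u \<notin> \<Union>M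
     \<Longrightarrow> v \<notin> \<Union>M \<Longrightarrow> u \<noteq> v \<Longrightarrow> (radj W ^^ k) u v \<Longrightarrow> False"
proof (induction k arbitrary: M u v rule: less_induct)
  case (less k)
  show False
  proof (cases k)
    case 0 then show ?thesis using less by simp
  next
    case (Suc k')
    then obtain w where uw: "radj W u w" and wv: "(radj W ^^ k') w v"
      using less.prems(8) relpowp_Suc_D2 by metis
    have uwE: "{u,w} \<in> E" "u\<in>W" "w\<in>W" using uw radj_def by auto
    show False
    proof (cases "w = v")
      case True
      then show False using augment_contra[OF less.prems(1,2) uwE(1)] uwE less.prems(5,6) by auto
    next
      case False
      have uw': "u \<noteq> w" using edge_neq uwE(1) by blast
      have k'lt: "k' < k" using Suc by simp
      have main: "matching W N \<Longrightarrow> card N = nu W \<Longrightarrow> w \<notin> \<Union>N \<Longrightarrow> False" for N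
      proof (induction "card (N - M)" arbitrary: N rule: less_induct)
        case less2: less
        have uN: "u \<in> \<Union>N"
        proof (rule ccontr)
          assume "u \<notin> \<Union>N"
          then show False using augment_contra[OF less2.prems(1,2) uwE(1)] uwE less2.prems(3) by auto
        qed
        have vN: "v \<in> \<Union>N"
        proof (rule ccontr)
          assume "v \<notin> \<Union>N"
          then show False
            using less.IH[OF k'lt less2.prems(1,2) uwE(3) less.prems(4) less2.prems(3) _ False wv] by auto
        qed
        have finM: "finite (\<Union>M)" using matching_fin[OF less.prems(1)] less.prems(1)
          by (auto simp: matching_def intro: edge_fin)
        have finN: "finite (\<Union>N)" using matching_fin[OF less2.prems(1)] less2.prems(1)
          by (auto simp: matching_def intro: edge_fin)
        have cardeq: "card (\<Union>M) = card (\<Union>N)"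
          using card_Union_matching[OF less.prems(1)] card_Union_matching[OF less2.prems(1)]
            less.prems(2) less2.prems(2) by simp
        have cd: "card (\<Union>M - \<Union>N) = card (\<Union>N - \<Union>M)"
          using card_Diff_subset_Int[of "\<Union>M" "\<Union>N"] card_Diff_subset_Int[of "\<Union>N" "\<Union>M"] finM finN cardeq
          by (simp add: Int_commute)
        have "{u,v} \<subseteq> \<Union>N - \<Union>M" using uN vN less.prems(5,6) by auto
        then have "card {u,v} \<le> card (\<Union>N - \<Union>M)" using finN by (intro card_mono) auto
        then have c2: "2 \<le> card (\<Union>M - \<Union>N)" using cd less.prems(7) by simp
        have "\<exists>x. x \<in> \<Union>M - \<Union>N \<and> x \<noteq> w"
        proof (rule ccontr)
          assume "\<not> ?thesis"
          then have "\<Union>M - \<Union>N \<subseteq> {w}" by auto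
          then have "card (\<Union>M - \<Union>N) \<le> 1" using card_mono[of "{w}"] by fastforce
          then show False using c2 by simp
        qed
        then obtain x e where xe: "x \<in> e" "e \<in> M" "x \<notin> \<Union>N" "x \<noteq> w" by auto
        have eE: "e \<in> E" "e \<subseteq> W" using xe less.prems(1) by (auto simp: matching_def)
        obtain y where ey: "e = {x, y}" "x \<noteq> y"
        proof -
          obtain a b where "a \<noteq> b" "e = {a,b}" using two eE(1) by blast
          then show ?thesis using that xe(1) by auto
        qed
        have yN: "y \<in> \<Union>N"
        proof (rule ccontr)
          assume "y \<notin> \<Union>N"
          then have "e \<inter> \<Union>N = {}" using ey xe(3) by auto
          then show False using augment_contra[OF less2.prems(1,2) eE] by blast
        qed
        then obtain f where f: "f \<in> N" "y \<in> f" by auto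
        define N' where "N' = insert e (N - {f})"
        have eN: "e \<notin> N" using xe by auto
        have mN': "matching W N'"
        proof -
          have "\<forall>g\<in>N - {f}. e \<inter> g = {}"
          proof
            fix g assume g: "g \<in> N - {f}"
            have "x \<notin> g" using g xe(3) by auto
            moreover have "y \<notin> g" using g f less2.prems(1) unfolding matching_def by blast
            ultimately show "e \<inter> g = {}" using ey by auto
          qed
          note dis = this
          have s1: "N' \<subseteq> E" "\<forall>g\<in>N'. g \<subseteq> W"
            using less2.prems(1) eE unfolding N'_def matching_def by auto
          have s2: "\<forall>g1\<in>N'. \<forall>g2\<in>N'. g1 \<noteq> g2 \<longrightarrow> g1 \<inter> g2 = {}"
          proof (intro ballI impI)
            fix g1 g2 assume g: "g1 \<in> N'" "g2 \<in> N'" "g1 \<noteq> g2"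
            then consider "g1 = e" "g2 \<in> N - {f}" | "g2 = e" "g1 \<in> N - {f}" | "g1 \<in> N" "g2 \<in> N"
              unfolding N'_def by auto
            then show "g1 \<inter> g2 = {}"
            proof cases
              case 1 then show ?thesis using dis by auto
            next
              case 2 then show ?thesis using dis by auto
            next
              case 3 then show ?thesis using g(3) less2.prems(1) unfolding matching_def by blast
            qed
          qed
          show ?thesis using s1 s2 unfolding matching_def by blast
        qed
        have "card N > 0" using f(1) matching_fin[OF less2.prems(1)] by (auto simp: card_gt_0_iff)
        then have cN': "card N' = nu W"
          using eN f(1) matching_fin[OF less2.prems(1)] less2.prems(2) unfolding N'_def
          by (simp add: card_Diff_singleton)
        have wN': "w \<notin> \<Union>N'"
          using less2.prems(3) xe(4) yN ey unfolding N'_def by auto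
        have fM: "f \<notin> M"
        proof
          assume "f \<in> M"
          moreover have "f \<noteq> e" using f(1) eN by auto
          ultimately have "f \<inter> e = {}" using less.prems(1) xe(2) unfolding matching_def by blast
          then show False using f(2) ey by auto
        qed
        have "N' - M = (N - M) - {f}" unfolding N'_def using xe(2) by auto
        moreover have "card ((N - M) - {f}) < card (N - M)"
          by (rule card_Diff1_less) (use f(1) fM matching_fin[OF less2.prems(1)] in auto)
        ultimately have "card (N' - M) < card (N - M)" by simp
        then show False using less2.hyps[OF _ mN' cN' wN'] by blast
      qed
      obtain N where "matching W N" "card N = nu W" "w \<notin> \<Union>N" using allmiss uwE(3) by blast
      then show False using main by blast
    qed
  qed
qed

lemma radj_sym: "radj W u v = radj W v u"
  unfolding radj_def by (auto simp: insert_commute)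

lemma reach_sym: "(radj W)\<^sup>*\<^sup>* u v \<Longrightarrow> (radj W)\<^sup>*\<^sup>* v u"
proof (induction rule: rtranclp_induct)
  case base then show ?case by simp
next
  case (step y z)
  then have "radj W z y" using radj_sym by blast
  then show ?case using step.IH by (meson converse_rtranclp_into_rtranclp)
qed

lemma reach_in: "(radj W)\<^sup>*\<^sup>* u v \<Longrightarrow> u \<in> W \<Longrightarrow> v \<in> W"
  by (induction rule: rtranclp_induct) (auto simp: radj_def)

lemma comp_sub: "v \<in> W \<Longrightarrow> comp W v \<subseteq> W"
  unfolding comp_def using reach_in by blast

lemma comp_self: "v \<in> comp W v"
  unfolding comp_def by simp

lemma comp_eq: "u \<in> comp W v \<Longrightarrow> comp W u = comp W v"
  unfolding comp_def using reach_sym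
  by (auto intro: rtranclp_trans)

lemma matching_subset: "matching W M \<Longrightarrow> M' \<subseteq> M \<Longrightarrow> matching W M'"
  unfolding matching_def by blast

lemma matching_mono: "matching W M \<Longrightarrow> W \<subseteq> W' \<Longrightarrow> matching W' M"
  unfolding matching_def by blast

lemma tutte_berge:
  "finite W \<Longrightarrow> \<exists>X\<subseteq>W. int (card W) - 2 * int (nu W) \<le> int (oddc (W - X)) - int (card X)"
proof (induction "card W" arbitrary: W rule: less_induct)
  case less
  show ?case
  proof (cases "\<exists>v\<in>W. \<forall>M. matching W M \<and> card M = nu W \<longrightarrow> v \<in> \<Union>M")
    case True
    then obtain v where vW: "v \<in> W" and cov: "\<And>M. matching W M \<Longrightarrow> card M = nu W \<Longrightarrow> v \<in> \<Union>M"
      by blast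
    define W' where "W' = W - {v}"
    have lt: "card W' < card W" unfolding W'_def using vW less.prems by (intro card_Diff1_less)
    have finW': "finite W'" unfolding W'_def using less.prems by simp
    obtain X' where X': "X' \<subseteq> W'" "int (card W') - 2 * int (nu W') \<le> int (oddc (W' - X')) - int (card X')"
      using less.hyps[OF lt finW'] by blast
    have nu1: "nu W \<le> nu W' + 1"
    proof -
      obtain M where M: "matching W M" "card M = nu W" using ex_max by blast
      then obtain e where e: "e \<in> M" "v \<in> e" using cov by blast
      have "matching W' (M - {e})"
      proof -
        have "\<forall>g\<in>M - {e}. g \<subseteq> W'"
        proof
          fix g assume g: "g \<in> M - {e}"
          then have "g \<inter> e = {}" "g \<subseteq> W" using M(1) e(1) unfolding matching_def by auto
          then show "g \<subseteq> W'" using e(2) unfolding W'_def by auto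
        qed
        then show ?thesis using M(1) unfolding matching_def by blast
      qed
      then have "card (M - {e}) \<le> nu W'" by (rule card_le_nu)
      then show ?thesis using M e matching_fin[OF M(1)] by (simp add: card_Diff_singleton)
    qed
    have nu2: "nu W' < nu W"
    proof -
      obtain M where M: "matching W' M" "card M = nu W'" using ex_max by blast
      have mW: "matching W M" using M(1) matching_mono unfolding W'_def by blast
      have "card M \<noteq> nu W"
      proof
        assume "card M = nu W"
        then have "v \<in> \<Union>M" using cov mW by blast
        then show False using M(1) unfolding matching_def W'_def by auto
      qed
      then show ?thesis using card_le_nu[OF mW] M(2) by simp
    qed
    define X where "X = insert v X'"
    have XW: "X \<subseteq> W" using X'(1) vW unfolding X_def W'_def by auto
    have vX': "v \<notin> X'" using X'(1) unfolding W'_def by auto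
    have finX': "finite X'" using X'(1) finW' finite_subset by blast
    have cX: "card X = card X' + 1" unfolding X_def using vX' finX' by simp
    have WX: "W - X = W' - X'" unfolding X_def W'_def by auto
    have cW: "card W = card W' + 1" unfolding W'_def using vW less.prems
      by (simp add: card_Diff_singleton) (metis Suc_pred card_gt_0_iff empty_iff)
    show ?thesis
      using X'(2) nu1 nu2 cX cW WX XW by (intro exI[of _ X]) auto
  next
    case False
    then have allmiss: "\<forall>v\<in>W. \<exists>M. matching W M \<and> card M = nu W \<and> v \<notin> \<Union>M" by blast
    obtain M where M: "matching W M" "card M = nu W" using ex_max by blast
    define U where "U = W - \<Union>M"
    have UM: "\<Union>M \<subseteq> W" using M(1) unfolding matching_def by auto
    have "card (\<Union>M) \<le> card W" using UM less.prems by (intro card_mono)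
    then have cW: "card W = 2 * nu W + card U"
    proof -
      have "card (W - \<Union>M) = card W - card (\<Union>M)"
        by (rule card_Diff_subset[OF matching_Union_fin[OF M(1)] UM])
      then show ?thesis unfolding U_def using card_Union_matching[OF M(1)] M(2) \<open>card (\<Union>M) \<le> card W\<close>
        by linarith
    qed
    have noreach: "u \<in> U \<Longrightarrow> u' \<in> U \<Longrightarrow> u \<noteq> u' \<Longrightarrow> \<not> (radj W)\<^sup>*\<^sup>* u u'" for u u'
      unfolding U_def using gallai[OF allmiss M] by (metis DiffD1 DiffD2 rtranclp_imp_relpowp)
    have inj: "inj_on (comp W) U"
    proof (rule inj_onI)
      fix u u' assume u: "u \<in> U" "u' \<in> U" "comp W u = comp W u'"
      then have "u' \<in> comp W u" using comp_self by metis
      then show "u = u'" using noreach[OF u(1,2)] unfolding comp_def by blast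
    qed
    have oddC: "odd (card (comp W u))" if uU: "u \<in> U" for u
    proof -
      define C where "C = comp W u"
      define MC where "MC = {e \<in> M. e \<subseteq> C}"
      have mMC: "matching W MC" by (rule matching_subset[OF M(1)]) (auto simp: MC_def)
      have uW: "u \<in> W" using uU U_def by auto
      have Ceq: "C = insert u (\<Union>MC)"
      proof
        show "insert u (\<Union>MC) \<subseteq> C" unfolding MC_def C_def using comp_self by blast
        show "C \<subseteq> insert u (\<Union>MC)"
        proof
          fix y assume yC: "y \<in> C"
          show "y \<in> insert u (\<Union>MC)"
          proof (cases "y = u")
            case True then show ?thesis by simp
          next
            case False
            have yW: "y \<in> W" using yC comp_sub[OF uW] unfolding C_def by blast
            have ry: "(radj W)\<^sup>*\<^sup>* u y" using yC unfolding C_def comp_def by simp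
            have "y \<in> \<Union>M"
            proof (rule ccontr)
              assume "y \<notin> \<Union>M"
              then have "y \<in> U" using yW U_def by auto
              then have "\<not> (radj W)\<^sup>*\<^sup>* u y" using noreach[OF uU] False by metis
              then show False using ry by simp
            qed
            then obtain e where e: "e \<in> M" "y \<in> e" by blast
            have eE: "e \<in> E" "e \<subseteq> W" using e(1) M(1) unfolding matching_def by auto
            obtain a b where ab: "e = {a, b}" using two eE(1) by blast
            define z where "z = (if y = a then b else a)"
            have z: "e = {y, z}" using ab e(2) unfolding z_def by auto
            have "radj W y z" unfolding radj_def using eE z by auto
            then have "(radj W)\<^sup>*\<^sup>* u z" using ry by (meson rtranclp.rtrancl_into_rtrancl)
            then have "z \<in> C" unfolding C_def comp_def by simp
            then have "e \<subseteq> C" using yC z by simp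
            then show ?thesis using e unfolding MC_def by blast
          qed
        qed
      qed
      have uMC: "u \<notin> \<Union>MC" using uU unfolding U_def MC_def by blast
      have finMC: "finite (\<Union>MC)" by (rule matching_Union_fin[OF mMC])
      have "card (insert u (\<Union>MC)) = Suc (card (\<Union>MC))" by (rule card_insert_disjoint[OF finMC uMC])
      then have "card C = Suc (2 * card MC)" using card_Union_matching[OF mMC] by (simp only: Ceq)
      then show ?thesis unfolding C_def by simp
    qed
    have "card U \<le> oddc W"
      unfolding oddc_def
    proof (rule card_inj_on_le[OF inj])
      show "comp W ` U \<subseteq> {C \<in> comps W. odd (card C)}"
        using oddC unfolding comps_def U_def by auto
      show "finite {C \<in> comps W. odd (card C)}" unfolding comps_def using less.prems by simp
    qed
    then show ?thesis using cW by (intro exI[of _ "{}"]) auto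
  qed
qed

end

lemma sg_of: "simple_graph V E \<Longrightarrow> sg E"
proof -
  assume a: "simple_graph V E"
  have "E \<subseteq> Pow V" using a unfolding simple_graph_def by auto
  then have "finite E" using a unfolding simple_graph_def by (meson finite_Pow_iff finite_subset)
  then show "sg E" using a unfolding sg_def simple_graph_def by blast
qed

lemma es_le:
  assumes sg: "simple_graph V E" and En: "E \<noteq> {}"
  defines "S \<equiv> {v \<in> V. degree E v = max_degree V E}"
  shows "es_Delta V E + sg.nu E S \<le> card S"
proof -
  interpret sg E by (rule sg_of[OF sg])
  have finV: "finite V" using sg simple_graph_def by auto
  have EV: "\<forall>e\<in>E. e \<subseteq> V" using sg unfolding simple_graph_def by auto
  define \<Delta> where "\<Delta> = max_degree V E"
  obtain e0 where e0: "e0 \<in> E" using En by blast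
  obtain a b where ab: "e0 = {a,b}" "a \<in> V" using sg e0 unfolding simple_graph_def by blast
  have Vne: "V \<noteq> {}" using ab by auto
  have deg_le: "degree E v \<le> \<Delta>" if "v \<in> V" for v
    unfolding \<Delta>_def max_degree_def using finV that by (intro Max_ge) auto
  have "\<Delta> \<in> degree E ` V" unfolding \<Delta>_def max_degree_def using finV Vne by (intro Max_in) auto
  then obtain v0 where v0: "v0 \<in> V" "degree E v0 = \<Delta>" by auto
  have "degree E a \<ge> 1"
  proof -
    have "e0 \<in> {e \<in> E. a \<in> e}" using e0 ab by auto
    then show ?thesis unfolding degree_def using finE
      by (metis (no_types, lifting) One_nat_def Suc_leI card_gt_0_iff empty_iff finite_subset mem_Collect_eq subsetI)
  qed
  then have D1: "\<Delta> \<ge> 1" using deg_le[OF ab(2)] by simp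
  have S_def': "S = {v \<in> V. degree E v = \<Delta>}" unfolding S_def \<Delta>_def by simp
  have finS: "finite S" unfolding S_def' using finV by simp
  have v0S: "v0 \<in> S" unfolding S_def' using v0 by simp
  define Cov where "Cov = {F. F \<subseteq> E \<and> (\<forall>v\<in>S. \<exists>e\<in>F. v \<in> e)}"
  have finCov: "finite Cov" unfolding Cov_def using finE by auto
  obtain M where M: "matching S M" "card M = nu S" using ex_max by blast
  define U where "U = S - \<Union>M"
  have UM: "\<Union>M \<subseteq> S" using M(1) unfolding matching_def by auto
  have cU: "card U + 2 * nu S = card S"
  proof -
    have "card (S - \<Union>M) = card S - card (\<Union>M)"
      by (rule card_Diff_subset[OF matching_Union_fin[OF M(1)] UM])
    moreover have "card (\<Union>M) \<le> card S" using UM finS by (intro card_mono)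
    ultimately show ?thesis unfolding U_def using card_Union_matching[OF M(1)] M(2) by linarith
  qed
  have exg: "\<exists>e. e \<in> E \<and> u \<in> e" if "u \<in> U" for u
  proof -
    have "degree E u = \<Delta>" using that unfolding U_def S_def' by auto
    then have "{e \<in> E. u \<in> e} \<noteq> {}" using D1 unfolding degree_def by (metis card.empty not_one_le_zero)
    then show ?thesis by blast
  qed
  define g where "g u = (SOME e. e \<in> E \<and> u \<in> e)" for u
  have g: "g u \<in> E \<and> u \<in> g u" if "u \<in> U" for u
    unfolding g_def using someI_ex[OF exg[OF that]] .
  define F0 where "F0 = M \<union> g ` U"
  have F0Cov: "F0 \<in> Cov"
  proof -
    have "F0 \<subseteq> E" using M(1) g unfolding F0_def matching_def by auto
    moreover have "\<forall>v\<in>S. \<exists>e\<in>F0. v \<in> e"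
    proof
      fix v assume "v \<in> S"
      show "\<exists>e\<in>F0. v \<in> e"
      proof (cases "v \<in> \<Union>M")
        case True then show ?thesis unfolding F0_def by auto
      next
        case False
        then have "v \<in> U" using \<open>v \<in> S\<close> U_def by auto
        then show ?thesis using g unfolding F0_def by blast
      qed
    qed
    ultimately show ?thesis unfolding Cov_def by blast
  qed
  have cF0: "card F0 + nu S \<le> card S"
  proof -
    have "finite U" using finS U_def by simp
    then have "card F0 \<le> card M + card U" unfolding F0_def
      by (metis card_Un_le card_image_le add_le_mono le_trans order_refl)
    then show ?thesis using cU M(2) by linarith
  qed
  define m where "m = Min (card ` Cov)"
  have "m \<in> card ` Cov" unfolding m_def using finCov F0Cov by (intro Min_in) auto
  then obtain F where FCov: "F \<in> Cov" and cF: "card F = m" by auto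
  have Fmin: "card F \<le> card F'" if "F' \<in> Cov" for F'
    unfolding cF m_def using finCov that by (intro Min_le) auto
  have FE: "F \<subseteq> E" and Fcov: "\<forall>v\<in>S. \<exists>e\<in>F. v \<in> e" using FCov unfolding Cov_def by auto
  have finF: "finite F" using FE finE finite_subset by blast
  have up: "degree (E - F) v \<le> \<Delta> - 1" if vV: "v \<in> V" for v
  proof (cases "v \<in> S")
    case True
    then obtain e where e: "e \<in> F" "v \<in> e" using Fcov by blast
    have "{e' \<in> E - F. v \<in> e'} \<subseteq> {e' \<in> E. v \<in> e'} - {e}" using e by auto
    then have "card {e' \<in> E - F. v \<in> e'} \<le> card ({e' \<in> E. v \<in> e'} - {e})"
      using finE by (intro card_mono) auto
    also have "\<dots> = card {e' \<in> E. v \<in> e'} - 1"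
      using e FE by (subst card_Diff_singleton) auto
    finally show ?thesis using True unfolding degree_def S_def' by simp
  next
    case False
    then have "degree E v < \<Delta>" using deg_le[OF vV] vV unfolding S_def' by auto
    moreover have "degree (E - F) v \<le> degree E v"
      unfolding degree_def using finE by (intro card_mono) auto
    ultimately show ?thesis by linarith
  qed
  have "F \<noteq> {}" using Fcov v0S by blast
  then obtain e where eF: "e \<in> F" by blast
  have "F - {e} \<notin> Cov"
  proof
    assume "F - {e} \<in> Cov"
    then have "card F \<le> card (F - {e})" using Fmin by blast
    moreover have "card (F - {e}) < card F" using finF eF by (rule card_Diff1_less)
    ultimately show False by simp
  qed
  then obtain v where vS: "v \<in> S" and nov: "\<forall>e'\<in>F - {e}. v \<notin> e'"
    unfolding Cov_def using FE by blast
  have ve: "v \<in> e" using Fcov vS nov by blast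
  have "{e' \<in> E - F. v \<in> e'} = {e' \<in> E. v \<in> e'} - {e}" using nov ve eF by auto
  then have "degree (E - F) v = card ({e' \<in> E. v \<in> e'} - {e})" unfolding degree_def by simp
  also have "\<dots> = degree E v - 1" unfolding degree_def using eF FE ve finE
    by (subst card_Diff_singleton) auto
  finally have "degree (E - F) v = degree E v - 1" .
  then have dv: "degree (E - F) v = \<Delta> - 1" using vS unfolding S_def' by simp
  have vV: "v \<in> V" using vS S_def' by auto
  have "max_degree V (E - F) = \<Delta> - 1"
    unfolding max_degree_def
  proof (rule Max_eqI)
    show "finite (degree (E - F) ` V)" using finV by simp
    show "\<And>y. y \<in> degree (E - F) ` V \<Longrightarrow> y \<le> \<Delta> - 1" using up by auto
    show "\<Delta> - 1 \<in> degree (E - F) ` V" using dv vV by (metis image_eqI)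
  qed
  then have "card F \<in> {card F |F. F \<subseteq> E \<and> max_degree V (E - F) = max_degree V E - 1}"
    using FE unfolding \<Delta>_def by blast
  moreover have "finite {card F |F. F \<subseteq> E \<and> max_degree V (E - F) = max_degree V E - 1}"
  proof -
    have "{card F |F. F \<subseteq> E \<and> max_degree V (E - F) = max_degree V E - 1} \<subseteq> card ` Pow E" by auto
    then show ?thesis using finE finite_subset by blast
  qed
  ultimately have "es_Delta V E \<le> card F" unfolding es_Delta_def by (intro Min_le)
  moreover have "card F \<le> card F0" using Fmin F0Cov by blast
  ultimately show ?thesis using cF0 by linarith
qed

definition aa :: "nat \<Rightarrow> real" where
  "aa d = (if d = 1 then 8 else if d = 2 then 4 else if d = 3 then 2 else if d = 4 then 2
     else if d = 5 then 3/2 else 8 / real d)"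

definition bb :: "nat \<Rightarrow> real" where
  "bb d = (if d = 3 then 2 else if d = 5 then 1/2 else 0)"

lemma aabb_nonneg: "aa d \<ge> 0" "bb d \<ge> 0" "bb d \<le> 2"
  unfolding aa_def bb_def by auto

lemma aabb_bounds:
  assumes "d \<ge> 1"
  shows "(aa d + bb d) * real d - bb d \<le> 10" "(aa d + bb d) * (real d - 1) - bb d \<le> 10"
proof -
  have "(aa d + bb d) * real d - bb d \<le> 10 \<and> (aa d + bb d) * (real d - 1) - bb d \<le> 10"
  proof (cases "d \<le> 5")
    case True
    then have "d = 1 \<or> d = 2 \<or> d = 3 \<or> d = 4 \<or> d = 5" using assms by auto
    then show ?thesis unfolding aa_def bb_def by auto
  next
    case False
    then have a: "aa d = 8 / real d" "bb d = 0" unfolding aa_def bb_def by auto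
    have "8 / real d * real d = 8" using False by simp
    moreover have "8 / real d * (real d - 1) \<le> 8 / real d * real d"
      using False by (intro mult_left_mono) auto
    ultimately show ?thesis unfolding a by simp
  qed
  then show "(aa d + bb d) * real d - bb d \<le> 10" "(aa d + bb d) * (real d - 1) - bb d \<le> 10" by auto
qed

lemma comp_arith:
  fixes d c e i :: nat
  assumes "d \<ge> 1" "c \<ge> 1" "e \<ge> 1" "d * c = 2 * i + e" "2 * i \<le> c * (c - 1)"
  shows "(if odd c then 9 - real c else - real c) \<le> aa d * real e + bb d"
proof -
  have rhs: "aa d * real e + bb d \<ge> 0" using aabb_nonneg by simp
  have c1_1: "9 - real c \<le> aa d * real e + bb d" if dc: "d = 1" "c = 1"
  proof -
    have h: "1 = 2 * i + e" "2 * i \<le> 0" using assms(4,5) dc by simp_all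
    have "e \<ge> 1" using h assms(3) by presburger
    then have "real e \<ge> 1" by simp
    then show ?thesis using dc by (simp add: aa_def bb_def; linarith)
  qed
  have c1_3: "9 - real c \<le> aa d * real e + bb d" if dc: "d = 1" "c = 3"
  proof -
    have h: "3 = 2 * i + e" "2 * i \<le> 6" using assms(4,5) dc by simp_all
    have "e \<ge> 1" using h assms(3) by presburger
    then have "real e \<ge> 1" by simp
    then show ?thesis using dc by (simp add: aa_def bb_def; linarith)
  qed
  have c1_5: "9 - real c \<le> aa d * real e + bb d" if dc: "d = 1" "c = 5"
  proof -
    have h: "5 = 2 * i + e" "2 * i \<le> 20" using assms(4,5) dc by simp_all
    have "e \<ge> 1" using h assms(3) by presburger
    then have "real e \<ge> 1" by simp
    then show ?thesis using dc by (simp add: aa_def bb_def; linarith)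
  qed
  have c1_7: "9 - real c \<le> aa d * real e + bb d" if dc: "d = 1" "c = 7"
  proof -
    have h: "7 = 2 * i + e" "2 * i \<le> 42" using assms(4,5) dc by simp_all
    have "e \<ge> 1" using h assms(3) by presburger
    then have "real e \<ge> 1" by simp
    then show ?thesis using dc by (simp add: aa_def bb_def; linarith)
  qed
  have c2_1: "9 - real c \<le> aa d * real e + bb d" if dc: "d = 2" "c = 1"
  proof -
    have h: "2 = 2 * i + e" "2 * i \<le> 0" using assms(4,5) dc by simp_all
    have "e \<ge> 2" using h assms(3) by presburger
    then have "real e \<ge> 2" by simp
    then show ?thesis using dc by (simp add: aa_def bb_def; linarith)
  qed
  have c2_3: "9 - real c \<le> aa d * real e + bb d" if dc: "d = 2" "c = 3"
  proof -
    have h: "6 = 2 * i + e" "2 * i \<le> 6" using assms(4,5) dc by simp_all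
    have "e \<ge> 2" using h assms(3) by presburger
    then have "real e \<ge> 2" by simp
    then show ?thesis using dc by (simp add: aa_def bb_def; linarith)
  qed
  have c2_5: "9 - real c \<le> aa d * real e + bb d" if dc: "d = 2" "c = 5"
  proof -
    have h: "10 = 2 * i + e" "2 * i \<le> 20" using assms(4,5) dc by simp_all
    have "e \<ge> 1" using h assms(3) by presburger
    then have "real e \<ge> 1" by simp
    then show ?thesis using dc by (simp add: aa_def bb_def; linarith)
  qed
  have c2_7: "9 - real c \<le> aa d * real e + bb d" if dc: "d = 2" "c = 7"
  proof -
    have h: "14 = 2 * i + e" "2 * i \<le> 42" using assms(4,5) dc by simp_all
    have "e \<ge> 1" using h assms(3) by presburger
    then have "real e \<ge> 1" by simp
    then show ?thesis using dc by (simp add: aa_def bb_def; linarith)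
  qed
  have c3_1: "9 - real c \<le> aa d * real e + bb d" if dc: "d = 3" "c = 1"
  proof -
    have h: "3 = 2 * i + e" "2 * i \<le> 0" using assms(4,5) dc by simp_all
    have "e \<ge> 3" using h assms(3) by presburger
    then have "real e \<ge> 3" by simp
    then show ?thesis using dc by (simp add: aa_def bb_def; linarith)
  qed
  have c3_3: "9 - real c \<le> aa d * real e + bb d" if dc: "d = 3" "c = 3"
  proof -
    have h: "9 = 2 * i + e" "2 * i \<le> 6" using assms(4,5) dc by simp_all
    have "e \<ge> 2" using h assms(3) by presburger
    then have "real e \<ge> 2" by simp
    then show ?thesis using dc by (simp add: aa_def bb_def; linarith)
  qed
  have c3_5: "9 - real c \<le> aa d * real e + bb d" if dc: "d = 3" "c = 5"
  proof -
    have h: "15 = 2 * i + e" "2 * i \<le> 20" using assms(4,5) dc by simp_all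
    have "e \<ge> 1" using h assms(3) by presburger
    then have "real e \<ge> 1" by simp
    then show ?thesis using dc by (simp add: aa_def bb_def; linarith)
  qed
  have c3_7: "9 - real c \<le> aa d * real e + bb d" if dc: "d = 3" "c = 7"
  proof -
    have h: "21 = 2 * i + e" "2 * i \<le> 42" using assms(4,5) dc by simp_all
    have "e \<ge> 1" using h assms(3) by presburger
    then have "real e \<ge> 1" by simp
    then show ?thesis using dc by (simp add: aa_def bb_def; linarith)
  qed
  have c4_1: "9 - real c \<le> aa d * real e + bb d" if dc: "d = 4" "c = 1"
  proof -
    have h: "4 = 2 * i + e" "2 * i \<le> 0" using assms(4,5) dc by simp_all
    have "e \<ge> 4" using h assms(3) by presburger
    then have "real e \<ge> 4" by simp
    then show ?thesis using dc by (simp add: aa_def bb_def; linarith)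
  qed
  have c4_3: "9 - real c \<le> aa d * real e + bb d" if dc: "d = 4" "c = 3"
  proof -
    have h: "12 = 2 * i + e" "2 * i \<le> 6" using assms(4,5) dc by simp_all
    have "e \<ge> 3" using h assms(3) by presburger
    then have "real e \<ge> 3" by simp
    then show ?thesis using dc by (simp add: aa_def bb_def; linarith)
  qed
  have c4_5: "9 - real c \<le> aa d * real e + bb d" if dc: "d = 4" "c = 5"
  proof -
    have h: "20 = 2 * i + e" "2 * i \<le> 20" using assms(4,5) dc by simp_all
    have "e \<ge> 2" using h assms(3) by presburger
    then have "real e \<ge> 2" by simp
    then show ?thesis using dc by (simp add: aa_def bb_def; linarith)
  qed
  have c4_7: "9 - real c \<le> aa d * real e + bb d" if dc: "d = 4" "c = 7"
  proof -
    have h: "28 = 2 * i + e" "2 * i \<le> 42" using assms(4,5) dc by simp_all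
    have "e \<ge> 1" using h assms(3) by presburger
    then have "real e \<ge> 1" by simp
    then show ?thesis using dc by (simp add: aa_def bb_def; linarith)
  qed
  have c5_1: "9 - real c \<le> aa d * real e + bb d" if dc: "d = 5" "c = 1"
  proof -
    have h: "5 = 2 * i + e" "2 * i \<le> 0" using assms(4,5) dc by simp_all
    have "e \<ge> 5" using h assms(3) by presburger
    then have "real e \<ge> 5" by simp
    then show ?thesis using dc by (simp add: aa_def bb_def; linarith)
  qed
  have c5_3: "9 - real c \<le> aa d * real e + bb d" if dc: "d = 5" "c = 3"
  proof -
    have h: "15 = 2 * i + e" "2 * i \<le> 6" using assms(4,5) dc by simp_all
    have "e \<ge> 4" using h assms(3) by presburger
    then have "real e \<ge> 4" by simp
    then show ?thesis using dc by (simp add: aa_def bb_def; linarith)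
  qed
  have c5_5: "9 - real c \<le> aa d * real e + bb d" if dc: "d = 5" "c = 5"
  proof -
    have h: "25 = 2 * i + e" "2 * i \<le> 20" using assms(4,5) dc by simp_all
    have "e \<ge> 3" using h assms(3) by presburger
    then have "real e \<ge> 3" by simp
    then show ?thesis using dc by (simp add: aa_def bb_def; linarith)
  qed
  have c5_7: "9 - real c \<le> aa d * real e + bb d" if dc: "d = 5" "c = 7"
  proof -
    have h: "35 = 2 * i + e" "2 * i \<le> 42" using assms(4,5) dc by simp_all
    have "e \<ge> 1" using h assms(3) by presburger
    then have "real e \<ge> 1" by simp
    then show ?thesis using dc by (simp add: aa_def bb_def; linarith)
  qed
  have c6_1: "9 - real c \<le> aa d * real e + bb d" if dc: "d = 6" "c = 1"
  proof -
    have h: "6 = 2 * i + e" "2 * i \<le> 0" using assms(4,5) dc by simp_all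
    have "e \<ge> 6" using h assms(3) by presburger
    then have "real e \<ge> 6" by simp
    then show ?thesis using dc by (simp add: aa_def bb_def; linarith)
  qed
  have c6_3: "9 - real c \<le> aa d * real e + bb d" if dc: "d = 6" "c = 3"
  proof -
    have h: "18 = 2 * i + e" "2 * i \<le> 6" using assms(4,5) dc by simp_all
    have "e \<ge> 5" using h assms(3) by presburger
    then have "real e \<ge> 5" by simp
    then show ?thesis using dc by (simp add: aa_def bb_def; linarith)
  qed
  have c6_5: "9 - real c \<le> aa d * real e + bb d" if dc: "d = 6" "c = 5"
  proof -
    have h: "30 = 2 * i + e" "2 * i \<le> 20" using assms(4,5) dc by simp_all
    have "e \<ge> 3" using h assms(3) by presburger
    then have "real e \<ge> 3" by simp
    then show ?thesis using dc by (simp add: aa_def bb_def; linarith)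
  qed
  have c6_7: "9 - real c \<le> aa d * real e + bb d" if dc: "d = 6" "c = 7"
  proof -
    have h: "42 = 2 * i + e" "2 * i \<le> 42" using assms(4,5) dc by simp_all
    have "e \<ge> 2" using h assms(3) by presburger
    then have "real e \<ge> 2" by simp
    then show ?thesis using dc by (simp add: aa_def bb_def; linarith)
  qed
  show ?thesis
  proof (cases "odd c")
    case False then show ?thesis using rhs by simp
  next
    case True
    show ?thesis
    proof (cases "c \<ge> 9")
      case True then show ?thesis using rhs by simp
    next
      case False
      then have cc: "c = 1 \<or> c = 3 \<or> c = 5 \<or> c = 7" using \<open>odd c\<close> assms(2)
        by presburger
      show ?thesis
      proof (cases "d \<le> 6")
        case True
        then have "d = 1 \<or> d = 2 \<or> d = 3 \<or> d = 4 \<or> d = 5 \<or> d = 6" using assms(1) by auto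
        then show ?thesis using cc \<open>odd c\<close> c1_1 c1_3 c1_5 c1_7 c2_1 c2_3 c2_5 c2_7 c3_1 c3_3 c3_5 c3_7
          c4_1 c4_3 c4_5 c4_7 c5_1 c5_3 c5_5 c5_7 c6_1 c6_3 c6_5 c6_7 by auto
      next
        case False
        have "e \<ge> d" using cc assms(4,5) False by auto
        then have "real e \<ge> real d" by simp
        then have "8 / real d * real e \<ge> 8 / real d * real d" using False by (intro mult_left_mono) auto
        moreover have "8 / real d * real d = 8" using False by simp
        moreover have "aa d = 8 / real d" "bb d = 0" using False unfolding aa_def bb_def by auto
        ultimately show ?thesis using True cc by auto
      qed
    qed
  qed
qed

lemma final_arith:
  fixes a b d x t A eD k SE P :: real
  assumes ab: "a \<ge> 0" "b \<ge> 0" "b \<le> 2" "(a + b) * d - b \<le> 10" "(a + b) * (d - 1) - b \<le> 10"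
    and P: "P \<le> a * SE + b * k" and SE: "SE \<le> A" and F1: "A + 2 * eD \<le> d * x + (d - 1) * t"
    and F2: "x + t + k \<le> eD + A + 1" and nn: "eD \<ge> 0" "x \<ge> 0" "t \<ge> 0" "d \<ge> 1"
  shows "P \<le> 10 * x + 10 * t + 2"
proof -
  have h1: "a * SE \<le> a * A" using ab SE by (intro mult_left_mono) auto
  have h2: "b * k \<le> b * (eD + A + 1 - x - t)" using ab F2 by (intro mult_left_mono) auto
  have h3: "b * eD \<le> (2 * (a + b)) * eD" using ab nn by (intro mult_right_mono) auto
  have h4: "(a + b) * (A + 2 * eD) \<le> (a + b) * (d * x + (d - 1) * t)" using ab F1 by (intro mult_left_mono) auto
  have h5: "((a + b) * d - b) * x \<le> 10 * x" using ab nn by (intro mult_right_mono) auto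
  have h6: "((a + b) * (d - 1) - b) * t \<le> 10 * t" using ab nn by (intro mult_right_mono) auto
  have e1: "b * (eD + A + 1 - x - t) = b * eD + b * A + b - b * x - b * t" by (simp add: algebra_simps)
  have e2: "(a + b) * (A + 2 * eD) = a * A + b * A + (2 * (a + b)) * eD" by (simp add: algebra_simps)
  have e3: "(a + b) * (d * x + (d - 1) * t) = ((a + b) * d - b) * x + ((a + b) * (d - 1) - b) * t + b * x + b * t"
    by (simp add: algebra_simps)
  show ?thesis using P h1 h2 h3 h4 h5 h6 e1 e2 e3 ab by linarith
qed

context sg begin

lemma leave: "r\<^sup>*\<^sup>* a b \<Longrightarrow> a \<in> B \<Longrightarrow> b \<notin> B \<Longrightarrow> \<exists>x y. x \<in> B \<and> y \<notin> B \<and> r x y"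
proof (induction rule: rtranclp_induct)
  case base then show ?case by simp
next
  case (step y z)
  show ?case
  proof (cases "y \<in> B")
    case True then show ?thesis using step by blast
  next
    case False then show ?thesis using step by blast
  qed
qed

definition crossing :: "'a set set \<Rightarrow> 'a set set" where
  "crossing P = {e \<in> E. \<forall>B\<in>P. \<not> e \<subseteq> B}"

lemma edge_obtain:
  assumes "e \<in> E" obtains u v where "u \<noteq> v" "e = {u, v}"
  using assms two by blast

lemma partition_cross:
  assumes "finite P" "\<forall>B\<in>P. B \<noteq> {}" "\<forall>B\<in>P. \<forall>B'\<in>P. B \<noteq> B' \<longrightarrow> B \<inter> B' = {}" "\<Union>P = V"
    and conn: "\<forall>u\<in>V. \<forall>v\<in>V. (adj E)\<^sup>*\<^sup>* u v" and EV: "\<forall>e\<in>E. e \<subseteq> V"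
  shows "card P \<le> card (crossing P) + 1"
  using assms(1-4)
proof (induction "card P" arbitrary: P rule: less_induct)
  case less
  show ?case
  proof (cases "card P \<le> 1")
    case True then show ?thesis by simp
  next
    case False
    then have "P \<noteq> {}" by auto
    then obtain B1 where B1: "B1 \<in> P" by blast
    have "card (P - {B1}) \<ge> 1" using False B1 less.prems(1) by (simp add: card_Diff_singleton)
    then have "P - {B1} \<noteq> {}" by (metis card.empty not_one_le_zero)
    then obtain B2 where B2: "B2 \<in> P" "B2 \<noteq> B1" by blast
    obtain a where a: "a \<in> B1" using less.prems(2) B1 by blast
    obtain b where b: "b \<in> B2" using less.prems(2) B2 by blast
    have bB1: "b \<notin> B1" using less.prems(3) B1 B2 b by blast
    have abV: "a \<in> V" "b \<in> V" using less.prems(4) a b B1 B2 by auto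
    obtain x y where xy: "x \<in> B1" "y \<notin> B1" "adj E x y"
      using leave[OF conn[rule_format, OF abV] a bB1] by blast
    have xyE: "{x, y} \<in> E" using xy(3) adj_def by metis
    have "y \<in> V" using EV xyE by blast
    then obtain B' where B': "B' \<in> P" "y \<in> B'" using less.prems(4) by blast
    have B'1: "B' \<noteq> B1" using B' xy(2) by blast
    define P' where "P' = insert (B1 \<union> B') (P - {B1, B'})"
    have notin: "B1 \<union> B' \<notin> P - {B1, B'}"
    proof
      assume h: "B1 \<union> B' \<in> P - {B1, B'}"
      then have hP: "B1 \<union> B' \<in> P" and hne: "B1 \<union> B' \<noteq> B1" by auto
      have "(B1 \<union> B') \<inter> B1 = {}" using less.prems(3)[rule_format, OF hP B1 hne] .
      then show False using a by blast
    qed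
    have cP': "card P' = card P - 1"
    proof -
      have c1: "card (P - {B1, B'}) = card P - card {B1, B'}"
        using B1 B' less.prems(1) by (intro card_Diff_subset) auto
      have c2: "card {B1, B'} = 2" using B'1 by simp
      have fin: "finite (P - {B1, B'})" using less.prems(1) by simp
      have "card P' = Suc (card (P - {B1, B'}))"
        unfolding P'_def by (rule card_insert_disjoint[OF fin notin])
      then show ?thesis using c1 c2 False by simp
    qed
    have lt: "card P' < card P" using cP' False by simp
    have h1: "finite P'" unfolding P'_def using less.prems(1) by simp
    have h2: "\<forall>B\<in>P'. B \<noteq> {}" unfolding P'_def using less.prems(2) a by auto
    have h3: "\<forall>B\<in>P'. \<forall>B''\<in>P'. B \<noteq> B'' \<longrightarrow> B \<inter> B'' = {}"
    proof (intro ballI impI)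
      fix C1 C2 assume c: "C1 \<in> P'" "C2 \<in> P'" "C1 \<noteq> C2"
      show "C1 \<inter> C2 = {}"
      proof (cases "C1 = B1 \<union> B'")
        case True
        then have "C2 \<in> P - {B1, B'}" using c unfolding P'_def by auto
        then show ?thesis using True less.prems(3) B1 B' by blast
      next
        case n1: False
        then have C1: "C1 \<in> P - {B1, B'}" using c unfolding P'_def by auto
        show ?thesis
        proof (cases "C2 = B1 \<union> B'")
          case True
          then show ?thesis using C1 less.prems(3) B1 B' by blast
        next
          case False
          then have "C2 \<in> P - {B1, B'}" using c unfolding P'_def by auto
          then show ?thesis using C1 c(3) less.prems(3) by blast
        qed
      qed
    qed
    have h4: "\<Union>P' = V" unfolding P'_def using less.prems(4) B1 B' by auto
    have IH: "card P' \<le> card (crossing P') + 1" using less.hyps[OF lt h1 h2 h3 h4] .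
    have sub: "crossing P' \<subseteq> crossing P - {{x, y}}"
    proof
      fix e assume e: "e \<in> crossing P'"
      then have eE: "e \<in> E" and nb: "\<forall>B\<in>P'. \<not> e \<subseteq> B" unfolding crossing_def by auto
      have "\<forall>B\<in>P. \<not> e \<subseteq> B"
      proof
        fix B assume B: "B \<in> P"
        show "\<not> e \<subseteq> B"
        proof (cases "B = B1 \<or> B = B'")
          case True
          then have "B \<subseteq> B1 \<union> B'" by auto
          moreover have "B1 \<union> B' \<in> P'" unfolding P'_def by simp
          ultimately show ?thesis using nb by blast
        next
          case False
          then have "B \<in> P'" using B unfolding P'_def by auto
          then show ?thesis using nb by blast
        qed
      qed
      moreover have "e \<noteq> {x, y}"
      proof
        assume "e = {x, y}"
        then have "e \<subseteq> B1 \<union> B'" using xy B' by auto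
        moreover have "B1 \<union> B' \<in> P'" unfolding P'_def by simp
        ultimately show False using nb by blast
      qed
      ultimately show "e \<in> crossing P - {{x, y}}" using eE unfolding crossing_def by auto
    qed
    have xyc: "{x, y} \<in> crossing P"
    proof -
      have "\<forall>B\<in>P. \<not> {x, y} \<subseteq> B"
      proof (intro ballI notI)
        fix B assume B: "B \<in> P" "{x, y} \<subseteq> B"
        then have "B = B1" using less.prems(3) B1 xy(1) by blast
        then show False using B xy(2) by blast
      qed
      then show ?thesis unfolding crossing_def using xyE by blast
    qed
    have finc: "finite (crossing P)" unfolding crossing_def using finE by simp
    have "card (crossing P') \<le> card (crossing P - {{x, y}})" using sub finc by (intro card_mono) auto
    also have "\<dots> = card (crossing P) - 1" using xyc finc by (simp add: card_Diff_singleton)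
    finally have c1: "card (crossing P') \<le> card (crossing P) - 1" .
    have "card (crossing P) > 0" using xyc finc card_gt_0_iff by blast
    then have "card (crossing P') + 1 \<le> card (crossing P)" using c1 by linarith
    then show ?thesis using IH cP' False by linarith
  qed
qed

lemma card_filter_sum: "finite A \<Longrightarrow> card {x \<in> A. P x} = (\<Sum>x\<in>A. if P x then 1 else 0)"
  by (simp add: sum.inter_filter[symmetric])

lemma degsum:
  assumes finA: "finite A"
  shows "(\<Sum>v\<in>A. degree E v) = (\<Sum>e\<in>E. card (e \<inter> A))"
proof -
  have "(\<Sum>v\<in>A. degree E v) = (\<Sum>v\<in>A. \<Sum>e\<in>E. if v \<in> e then 1 else 0)"
    unfolding degree_def using finE by (intro sum.cong) (simp_all add: card_filter_sum)
  also have "\<dots> = (\<Sum>e\<in>E. \<Sum>v\<in>A. if v \<in> e then 1 else 0)" by (rule sum.swap)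
  also have "\<dots> = (\<Sum>e\<in>E. card {v \<in> A. v \<in> e})"
    using finA by (intro sum.cong) (simp_all add: card_filter_sum)
  also have "\<dots> = (\<Sum>e\<in>E. card (e \<inter> A))"
    by (intro sum.cong) (auto intro: arg_cong[where f=card])
  finally show ?thesis .
qed

lemma edge_cases:
  assumes "e \<in> E"
  shows "card (e \<inter> A) = (if e \<subseteq> A then 2 else if e \<inter> A \<noteq> {} then 1 else 0)"
proof -
  obtain u v where uv: "u \<noteq> v" "e = {u, v}" using edge_obtain[OF assms] .
  show ?thesis using uv by (cases "u \<in> A"; cases "v \<in> A") (auto simp: Int_insert_left)
qed

end

context sg begin

lemma main_count:
  fixes V S X :: "'a set" and \<Delta> :: nat
  assumes finV: "finite V" and EV: "\<forall>e\<in>E. e \<subseteq> V"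
    and conn: "\<forall>u\<in>V. \<forall>v\<in>V. (adj E)\<^sup>*\<^sup>* u v"
    and D1: "\<Delta> \<ge> 1" and deg: "\<forall>v\<in>V. degree E v \<le> \<Delta>"
    and Sdef: "S = {v \<in> V. degree E v = \<Delta>}" and XS: "X \<subseteq> S"
  shows "9 * real (oddc (S - X)) - 9 * real (card X) \<le> real (card S) + 10 * real (card (V - S)) + 9"
proof -
  define Y where "Y = S - X"
  define D where "D = V - Y"
  define T where "T = V - S"
  define K where "K = comps Y"
  have SV: "S \<subseteq> V" using Sdef by auto
  have YV: "Y \<subseteq> V" using SV Y_def by auto
  have finY: "finite Y" using YV finV finite_subset by blast
  have finS: "finite S" using SV finV finite_subset by blast
  have finX: "finite X" using XS finS finite_subset by blast
  have finT: "finite T" using finV T_def by simp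
  have finD: "finite D" using finV D_def by simp
  have DY: "D \<inter> Y = {}" unfolding D_def by auto
  have DXT: "D = X \<union> T" "X \<inter> T = {}" unfolding D_def T_def Y_def using XS SV by auto
  have KY: "C \<subseteq> Y \<and> C \<noteq> {}" if CK: "C \<in> K" for C
  proof -
    obtain v where v: "v \<in> Y" "C = comp Y v" using CK unfolding K_def comps_def by blast
    show ?thesis using comp_sub[OF v(1)] comp_self[of v Y] v(2) by blast
  qed
  have Kfin: "finite K" unfolding K_def comps_def using finY by simp
  have Kmem: "comp Y a \<in> K" "a \<in> comp Y a" if "a \<in> Y" for a
    using that comp_self[of a Y] unfolding K_def comps_def by auto
  have Kdisj: "C \<inter> C' = {}" if CC: "C \<in> K" "C' \<in> K" "C \<noteq> C'" for C C'
  proof (rule ccontr)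
    assume "C \<inter> C' \<noteq> {}"
    then obtain z where z: "z \<in> C" "z \<in> C'" by blast
    obtain v where v: "C = comp Y v" using CC(1) unfolding K_def comps_def by blast
    obtain v' where v': "C' = comp Y v'" using CC(2) unfolding K_def comps_def by blast
    have "comp Y z = C" using comp_eq[of z Y v] z(1) v by simp
    moreover have "comp Y z = C'" using comp_eq[of z Y v'] z(2) v' by simp
    ultimately show False using CC(3) by simp
  qed
  have Kedge: "b \<in> C" if C: "C \<in> K" and ab: "{a, b} \<in> E" "a \<in> C" "b \<in> Y" for C a b
  proof -
    obtain v where v: "C = comp Y v" using C unfolding K_def comps_def by blast
    have r: "(radj Y)\<^sup>*\<^sup>* v a" using ab(2) v unfolding comp_def by simp
    have aY: "a \<in> Y" using KY[OF C] ab(2) by blast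
    have "radj Y a b" unfolding radj_def using aY ab by simp
    then have "(radj Y)\<^sup>*\<^sup>* v b" using r by (meson rtranclp.rtrancl_into_rtrancl)
    then show ?thesis using v unfolding comp_def by simp
  qed
  have sumc: "(\<Sum>C\<in>K. card C) = card Y"
  proof -
    have "card (\<Union>K) = (\<Sum>C\<in>K. card C)"
    proof (rule card_Union_disjoint)
      show "pairwise disjnt K" unfolding pairwise_def disjnt_def using Kdisj by blast
      show "\<And>A. A \<in> K \<Longrightarrow> finite A" using KY finY finite_subset by blast
    qed
    moreover have "\<Union>K = Y"
    proof
      show "\<Union>K \<subseteq> Y" using KY by blast
      show "Y \<subseteq> \<Union>K" using Kmem by blast
    qed
    ultimately show ?thesis by simp
  qed
  define cross where "cross C = {e \<in> E. e \<inter> C \<noteq> {} \<and> \<not> e \<subseteq> C}" for C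
  define Ycross where "Ycross = {e \<in> E. e \<inter> Y \<noteq> {} \<and> \<not> e \<subseteq> Y}"
  have finYc: "finite Ycross" unfolding Ycross_def using finE by simp
  have fincross: "finite (cross C)" for C unfolding cross_def using finE by simp
  have crossY: "e \<inter> Y \<subseteq> C" if C: "C \<in> K" and e: "e \<in> cross C" for C e
  proof -
    have eE: "e \<in> E" and e1: "e \<inter> C \<noteq> {}" and e2: "\<not> e \<subseteq> C" using e unfolding cross_def by auto
    obtain u v where uv: "u \<noteq> v" "e = {u, v}" using edge_obtain[OF eE] .
    show ?thesis
    proof (cases "u \<in> C")
      case True
      then have "v \<notin> C" using e2 uv by auto
      then have "v \<notin> Y" using Kedge[OF C _ True] eE uv by blast
      then show ?thesis using True uv by auto
    next
      case False
      then have vC: "v \<in> C" using e1 uv by auto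
      have "{v, u} \<in> E" using eE uv by (simp add: insert_commute)
      then have "u \<notin> Y" using Kedge[OF C _ vC] False by blast
      then show ?thesis using vC uv by auto
    qed
  qed
  have crossSub: "cross C \<subseteq> Ycross" if C: "C \<in> K" for C
  proof
    fix e assume e: "e \<in> cross C"
    have "e \<inter> C \<noteq> {}" "e \<in> E" using e unfolding cross_def by auto
    then have "e \<inter> Y \<noteq> {}" using KY[OF C] by blast
    moreover have "\<not> e \<subseteq> Y"
    proof
      assume "e \<subseteq> Y"
      then have "e \<subseteq> C" using crossY[OF C e] by blast
      then show False using e unfolding cross_def by simp
    qed
    ultimately show "e \<in> Ycross" unfolding Ycross_def using \<open>e \<in> E\<close> by simp
  qed
  have crossDisj: "cross C \<inter> cross C' = {}" if "C \<in> K" "C' \<in> K" "C \<noteq> C'" for C C'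
  proof (rule ccontr)
    assume "cross C \<inter> cross C' \<noteq> {}"
    then obtain e where e: "e \<in> cross C" "e \<in> cross C'" by blast
    have "e \<inter> Y \<subseteq> C \<inter> C'" using crossY[OF that(1) e(1)] crossY[OF that(2) e(2)] by blast
    then have "e \<inter> Y = {}" using Kdisj[OF that] by blast
    moreover have "e \<inter> C \<noteq> {}" using e(1) unfolding cross_def by simp
    ultimately show False using KY[OF that(1)] by blast
  qed
  have SE: "(\<Sum>C\<in>K. card (cross C)) \<le> card Ycross"
  proof -
    have "card (\<Union>C\<in>K. cross C) = (\<Sum>C\<in>K. card (cross C))"
      by (rule card_UN_disjoint[OF Kfin]) (use fincross crossDisj in auto)
    moreover have "card (\<Union>C\<in>K. cross C) \<le> card Ycross"
      using crossSub finYc by (intro card_mono) auto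
    ultimately show ?thesis by simp
  qed
  define eD where "eD = card {e \<in> E. e \<subseteq> D}"
  have F1a: "2 * eD + card Ycross \<le> (\<Sum>d\<in>D. degree E d)"
  proof -
    have pe: "(if e \<subseteq> D then 2 else 0) + (if e \<in> Ycross then 1 else 0) \<le> card (e \<inter> D)"
      if eE: "e \<in> E" for e
    proof (cases "e \<subseteq> D")
      case True
      then have "e \<inter> Y = {}" using DY by blast
      then have "e \<notin> Ycross" unfolding Ycross_def by simp
      then show ?thesis using True edge_cases[OF eE, of D] by simp
    next
      case False
      show ?thesis
      proof (cases "e \<in> Ycross")
        case True
        then have "\<not> e \<subseteq> Y" unfolding Ycross_def by simp
        then obtain z where "z \<in> e" "z \<notin> Y" by blast
        moreover have "z \<in> V" using EV eE \<open>z \<in> e\<close> by blast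
        ultimately have "e \<inter> D \<noteq> {}" unfolding D_def by blast
        then show ?thesis using False True edge_cases[OF eE, of D] by simp
      next
        case False2: False
        then show ?thesis using False by simp
      qed
    qed
    have "(\<Sum>e\<in>E. (if e \<subseteq> D then 2 else 0) + (if e \<in> Ycross then 1 else 0)) \<le> (\<Sum>e\<in>E. card (e \<inter> D))"
      using pe by (intro sum_mono) auto
    also have "\<dots> = (\<Sum>d\<in>D. degree E d)" using degsum[OF finD] by simp
    finally have *: "(\<Sum>e\<in>E. (if e \<subseteq> D then 2 else 0) + (if e \<in> Ycross then 1 else 0)) \<le> (\<Sum>d\<in>D. degree E d)" .
    have "(\<Sum>e\<in>E. (if e \<subseteq> D then 2 else 0) + (if e \<in> Ycross then 1 else 0))
        = 2 * (\<Sum>e\<in>E. (if e \<subseteq> D then 1 else 0)) + (\<Sum>e\<in>E. (if e \<in> Ycross then 1 else (0::nat)))"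
      unfolding sum_distrib_left sum.distrib[symmetric] by (intro sum.cong) auto
    also have "\<dots> = 2 * eD + card {e \<in> E. e \<in> Ycross}"
      unfolding eD_def using finE by (simp add: card_filter_sum)
    also have "{e \<in> E. e \<in> Ycross} = Ycross" unfolding Ycross_def by auto
    finally show ?thesis using * by simp
  qed
  have F1b: "(\<Sum>d\<in>D. degree E d) \<le> \<Delta> * card X + (\<Delta> - 1) * card T"
  proof -
    have "(\<Sum>d\<in>D. degree E d) = (\<Sum>d\<in>X. degree E d) + (\<Sum>d\<in>T. degree E d)"
      unfolding DXT(1) using finX finT DXT(2) by (rule sum.union_disjoint)
    moreover have "(\<Sum>d\<in>X. degree E d) = \<Delta> * card X"
    proof -
      have "(\<Sum>d\<in>X. degree E d) = (\<Sum>d\<in>X. \<Delta>)" using XS Sdef by (intro sum.cong) auto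
      then show ?thesis by simp
    qed
    moreover have "(\<Sum>d\<in>T. degree E d) \<le> card T * (\<Delta> - 1)"
    proof -
      have "degree E v \<le> \<Delta> - 1" if "v \<in> T" for v
      proof -
        have "v \<in> V" "degree E v \<noteq> \<Delta>" using that unfolding T_def Sdef by auto
        then show "degree E v \<le> \<Delta> - 1" using deg by fastforce
      qed
      then show ?thesis using sum_bounded_above[of T "degree E" "\<Delta> - 1"] by simp
    qed
    ultimately show ?thesis by (simp add: mult.commute)
  qed
  have cD: "card D = card X + card T" unfolding DXT(1) using finX finT DXT(2) by (rule card_Un_disjoint)
  define P where "P = (\<lambda>d. {d}) ` D \<union> K"
  have F2: "card D + card K \<le> eD + card Ycross + 1"
  proof -
    have pc: "card P \<le> card (crossing P) + 1"
    proof (rule partition_cross[OF _ _ _ _ conn EV])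
      show "finite P" unfolding P_def using finD Kfin by simp
      show "\<forall>B\<in>P. B \<noteq> {}" unfolding P_def using KY by auto
      show "\<forall>B\<in>P. \<forall>B'\<in>P. B \<noteq> B' \<longrightarrow> B \<inter> B' = {}"
      proof (intro ballI impI)
        fix B B' assume B: "B \<in> P" "B' \<in> P" "B \<noteq> B'"
        show "B \<inter> B' = {}"
        proof (cases "B \<in> K")
          case True
          show ?thesis
          proof (cases "B' \<in> K")
            case True then show ?thesis using Kdisj \<open>B \<in> K\<close> B(3) by blast
          next
            case False
            then obtain d where "B' = {d}" "d \<in> D" using B(2) unfolding P_def by auto
            then show ?thesis using KY[OF \<open>B \<in> K\<close>] DY by blast
          qed
        next
          case False
          then obtain d where d: "B = {d}" "d \<in> D" using B(1) unfolding P_def by auto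
          show ?thesis
          proof (cases "B' \<in> K")
            case True then show ?thesis using KY[OF True] DY d by blast
          next
            case False
            then obtain d' where "B' = {d'}" using B(2) unfolding P_def by auto
            then show ?thesis using d B(3) by auto
          qed
        qed
      qed
      have "\<Union>K = Y"
      proof
        show "\<Union>K \<subseteq> Y" using KY by blast
        show "Y \<subseteq> \<Union>K" using Kmem by blast
      qed
      then show "\<Union>P = V" unfolding P_def D_def using YV by auto
    qed
    have cP: "card P = card D + card K"
    proof -
      have "(\<lambda>d. {d}) ` D \<inter> K = {}" using KY DY by fastforce
      then have "card P = card ((\<lambda>d. {d}) ` D) + card K"
        unfolding P_def using finD Kfin by (intro card_Un_disjoint) auto
      moreover have "card ((\<lambda>d. {d}) ` D) = card D" by (rule card_image) (auto simp: inj_on_def)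
      ultimately show ?thesis by simp
    qed
    have csub: "crossing P \<subseteq> {e \<in> E. e \<subseteq> D} \<union> Ycross"
    proof
      fix e assume e: "e \<in> crossing P"
      then have eE: "e \<in> E" and nb: "\<forall>B\<in>P. \<not> e \<subseteq> B" unfolding crossing_def by auto
      obtain u v where uv: "u \<noteq> v" "e = {u, v}" using edge_obtain[OF eE] .
      have KP: "K \<subseteq> P" unfolding P_def by auto
      show "e \<in> {e \<in> E. e \<subseteq> D} \<union> Ycross"
      proof (cases "u \<in> Y")
        case True
        have "\<not> e \<subseteq> comp Y u" using nb KP Kmem(1)[OF True] by blast
        then have "v \<notin> comp Y u" using uv Kmem(2)[OF True] by auto
        then have "v \<notin> Y" using Kedge[OF Kmem(1)[OF True] _ Kmem(2)[OF True]] eE uv by blast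
        then have "e \<in> Ycross" unfolding Ycross_def using eE uv True by auto
        then show ?thesis by simp
      next
        case uY: False
        show ?thesis
        proof (cases "v \<in> Y")
          case True
          have "\<not> e \<subseteq> comp Y v" using nb KP Kmem(1)[OF True] by blast
          then have "u \<notin> comp Y v" using uv Kmem(2)[OF True] by auto
          moreover have "{v, u} \<in> E" using eE uv by (simp add: insert_commute)
          ultimately have "u \<notin> Y" using Kedge[OF Kmem(1)[OF True] _ Kmem(2)[OF True]] by blast
          then have "e \<in> Ycross" unfolding Ycross_def using eE uv True by auto
          then show ?thesis by simp
        next
          case False
          have "u \<in> V" "v \<in> V" using EV eE uv by auto
          then have "e \<subseteq> D" using uY False uv unfolding D_def by auto
          then show ?thesis using eE by simp
        qed
      qed
    qed
    have "card (crossing P) \<le> card ({e \<in> E. e \<subseteq> D} \<union> Ycross)"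
      using csub finYc finE by (intro card_mono) auto
    also have "\<dots> \<le> eD + card Ycross" unfolding eD_def by (rule card_Un_le)
    finally show ?thesis using pc cP by simp
  qed
  have cY: "card Y = card S - card X" unfolding Y_def using finX XS by (intro card_Diff_subset) auto
  have cXS: "card X \<le> card S" using XS finS by (intro card_mono)
  have q_def: "oddc Y = card {C \<in> K. odd (card C)}" unfolding oddc_def K_def by simp
  show ?thesis
  proof (cases "D = {}")
    case True
    have e0: "{e \<in> E. e \<subseteq> D} = {}" using True edge_card by fastforce
    have Yc0: "Ycross = {}"
    proof -
      have "Y = V" using True YV unfolding D_def by auto
      then show ?thesis unfolding Ycross_def using EV by auto
    qed
    have "card K \<le> 1" using F2 e0 Yc0 unfolding eD_def by simp
    moreover have "oddc Y \<le> card K" unfolding q_def using Kfin by (intro card_mono) auto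
    ultimately have "oddc Y \<le> 1" by simp
    then show ?thesis unfolding Y_def by simp
  next
    case False
    then obtain d0 where d0: "d0 \<in> D" by blast
    define psi where "psi (C::'a set) = (if odd (card C) then 9 - real (card C) else - real (card C))" for C
    have pc: "psi C \<le> aa \<Delta> * real (card (cross C)) + bb \<Delta>" if C: "C \<in> K" for C
    proof -
      define iC where "iC = card {e \<in> E. e \<subseteq> C}"
      have CY: "C \<subseteq> Y" "C \<noteq> {}" using KY[OF C] by auto
      have finC: "finite C" using CY finY finite_subset by blast
      have eq1: "\<Delta> * card C = 2 * iC + card (cross C)"
      proof -
        have "(\<Sum>v\<in>C. degree E v) = (\<Sum>v\<in>C. \<Delta>)"
          using CY Y_def Sdef by (intro sum.cong) auto
        then have "\<Delta> * card C = (\<Sum>e\<in>E. card (e \<inter> C))" using degsum[OF finC] by (simp add: mult.commute)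
        also have "\<dots> = (\<Sum>e\<in>E. (if e \<subseteq> C then 2 else 0) + (if e \<in> cross C then 1 else 0))"
        proof (intro sum.cong refl)
          fix e assume eE: "e \<in> E"
          show "card (e \<inter> C) = (if e \<subseteq> C then 2 else 0) + (if e \<in> cross C then 1 else 0)"
            using edge_cases[OF eE, of C] eE unfolding cross_def by auto
        qed
        also have "\<dots> = 2 * (\<Sum>e\<in>E. (if e \<subseteq> C then 1 else 0)) + (\<Sum>e\<in>E. (if e \<in> cross C then 1 else (0::nat)))"
          unfolding sum_distrib_left sum.distrib[symmetric] by (intro sum.cong) auto
        also have "\<dots> = 2 * iC + card {e \<in> E. e \<in> cross C}"
          unfolding iC_def using finE by (simp add: card_filter_sum)
        also have "{e \<in> E. e \<in> cross C} = cross C" unfolding cross_def by auto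
        finally show ?thesis .
      qed
      have eq2: "2 * iC \<le> card C * (card C - 1)"
      proof -
        have "{e \<in> E. e \<subseteq> C} \<subseteq> {B. B \<subseteq> C \<and> card B = 2}" using edge_card by auto
        then have "iC \<le> card {B. B \<subseteq> C \<and> card B = 2}" unfolding iC_def
          using finC by (intro card_mono) auto
        also have "\<dots> = card C choose 2" by (rule n_subsets[OF finC])
        also have "\<dots> = card C * (card C - 1) div 2" by (rule choose_two)
        finally show ?thesis by linarith
      qed
      have eq3: "card (cross C) \<ge> 1"
      proof -
        obtain a where a: "a \<in> C" using CY by blast
        have aV: "a \<in> V" using a CY YV by blast
        have dV: "d0 \<in> V" "d0 \<notin> C" using d0 CY unfolding D_def by auto
        obtain x y where xy: "x \<in> C" "y \<notin> C" "adj E x y"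
          using leave[OF conn[rule_format, OF aV dV(1)] a dV(2)] by blast
        have "{x, y} \<in> E" using xy(3) adj_def by metis
        then have "{x, y} \<in> cross C" unfolding cross_def using xy by auto
        then have "cross C \<noteq> {}" by blast
        then show ?thesis using fincross[of C] by (simp add: Suc_le_eq card_gt_0_iff)
      qed
      have c1: "card C \<ge> 1" using CY finC by (simp add: Suc_le_eq card_gt_0_iff)
      show ?thesis unfolding psi_def using comp_arith[OF D1 c1 eq3 eq1 eq2] .
    qed
    have sum1: "(\<Sum>C\<in>K. psi C) \<le> aa \<Delta> * real (\<Sum>C\<in>K. card (cross C)) + bb \<Delta> * real (card K)"
    proof -
      have "(\<Sum>C\<in>K. psi C) \<le> (\<Sum>C\<in>K. aa \<Delta> * real (card (cross C)) + bb \<Delta>)"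
        using pc by (intro sum_mono) auto
      also have "\<dots> = aa \<Delta> * real (\<Sum>C\<in>K. card (cross C)) + bb \<Delta> * real (card K)"
        by (simp add: sum.distrib sum_distrib_left mult.commute)
      finally show ?thesis .
    qed
    have sum2: "(\<Sum>C\<in>K. psi C) = 9 * real (oddc Y) - real (card Y)"
    proof -
      have "(\<Sum>C\<in>K. psi C) = (\<Sum>C\<in>K. 9 * (if odd (card C) then 1 else 0) - real (card C))"
        unfolding psi_def by (intro sum.cong) auto
      also have "\<dots> = 9 * (\<Sum>C\<in>K. (if odd (card C) then 1 else 0)) - (\<Sum>C\<in>K. real (card C))"
        by (simp add: sum_subtractf sum_distrib_left)
      also have "(\<Sum>C\<in>K. (if odd (card C) then 1 else 0)) = real (card {C \<in> K. odd (card C)})"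
        unfolding real_of_card using sum.inter_filter[OF Kfin, of "\<lambda>_. 1::real"] by simp
      also have "(\<Sum>C\<in>K. real (card C)) = real (card Y)" using sumc by (metis of_nat_sum)
      finally show ?thesis unfolding q_def by simp
    qed
    have F1r: "real (card Ycross) + 2 * real eD \<le> real \<Delta> * real (card X) + (real \<Delta> - 1) * real (card T)"
    proof -
      have "2 * eD + card Ycross \<le> \<Delta> * card X + (\<Delta> - 1) * card T" using F1a F1b by linarith
      then have "real (2 * eD + card Ycross) \<le> real (\<Delta> * card X + (\<Delta> - 1) * card T)" by (simp only: of_nat_le_iff)
      then show ?thesis using D1 by (simp add: of_nat_diff)
    qed
    have F2r: "real (card X) + real (card T) + real (card K) \<le> real eD + real (card Ycross) + 1"
      using F2 cD by simp
    have SEr: "real (\<Sum>C\<in>K. card (cross C)) \<le> real (card Ycross)" using SE by (simp only: of_nat_le_iff)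
    have fin: "(\<Sum>C\<in>K. psi C) \<le> 10 * real (card X) + 10 * real (card T) + 2"
      using aabb_nonneg aabb_bounds[OF D1] D1
      by (intro final_arith[OF _ _ _ _ _ sum1 SEr F1r F2r]) auto
    then have "9 * real (oddc Y) - real (card Y) \<le> 10 * real (card X) + 10 * real (card T) + 2"
      using sum2 by simp
    then show ?thesis using cY cXS unfolding Y_def T_def by (simp add: of_nat_diff)
  qed
qed

end

lemma deg_facts:
  assumes sg: "simple_graph V E" and En: "E \<noteq> {}"
  shows "max_degree V E \<ge> 1" "\<forall>v\<in>V. degree E v \<le> max_degree V E"
proof -
  interpret sg E by (rule sg_of[OF sg])
  have finV: "finite V" using sg simple_graph_def by auto
  obtain e0 where e0: "e0 \<in> E" using En by blast
  obtain a b where ab: "e0 = {a,b}" "a \<in> V" using sg e0 unfolding simple_graph_def by blast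
  show deg_le: "\<forall>v\<in>V. degree E v \<le> max_degree V E"
    unfolding max_degree_def using finV by (auto intro: Max_ge)
  have "degree E a \<ge> 1"
  proof -
    have "e0 \<in> {e \<in> E. a \<in> e}" using e0 ab by auto
    moreover have "finite {e \<in> E. a \<in> e}" using finE by simp
    ultimately have "card {e \<in> E. a \<in> e} > 0" by (auto simp: card_gt_0_iff)
    then show ?thesis unfolding degree_def by simp
  qed
  then show "max_degree V E \<ge> 1" using deg_le ab(2) by fastforce
qed

lemma es_bound:
  assumes sg: "simple_graph V E" and cg: "connected_graph V E" and En: "E \<noteq> {}"
  shows "real (es_Delta V E) \<le> 5 / 9 * real (card V) + 1 / 2"
proof -
  interpret sg E by (rule sg_of[OF sg])
  define S where "S = {v \<in> V. degree E v = max_degree V E}"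
  have finV: "finite V" using sg simple_graph_def by auto
  have EV: "\<forall>e\<in>E. e \<subseteq> V" using sg unfolding simple_graph_def by auto
  have conn: "\<forall>u\<in>V. \<forall>v\<in>V. (adj E)\<^sup>*\<^sup>* u v" using cg unfolding connected_graph_def by auto
  have SV: "S \<subseteq> V" unfolding S_def by auto
  have finS: "finite S" using SV finV finite_subset by blast
  have es: "es_Delta V E + nu S \<le> card S" unfolding S_def by (rule es_le[OF sg En])
  obtain X where X: "X \<subseteq> S" "int (card S) - 2 * int (nu S) \<le> int (oddc (S - X)) - int (card X)"
    using tutte_berge[OF finS] by blast
  have mc: "9 * real (oddc (S - X)) - 9 * real (card X) \<le> real (card S) + 10 * real (card (V - S)) + 9"
    by (rule main_count[OF finV EV conn deg_facts(1)[OF sg En] deg_facts(2)[OF sg En] S_def X(1)])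
  have cV: "card (V - S) = card V - card S" using SV finS by (intro card_Diff_subset) auto
  have cSV: "card S \<le> card V" using SV finV by (intro card_mono)
  have r1: "real (es_Delta V E) + real (nu S) \<le> real (card S)" using es by (simp only: of_nat_add[symmetric] of_nat_le_iff)
  have r2: "real (card S) - 2 * real (nu S) \<le> real (oddc (S - X)) - real (card X)"
  proof -
    have "real_of_int (int (card S) - 2 * int (nu S)) \<le> real_of_int (int (oddc (S - X)) - int (card X))"
      using X(2) by (simp only: of_int_le_iff)
    then show ?thesis by simp
  qed
  have r3: "real (card (V - S)) = real (card V) - real (card S)" using cV cSV by (simp add: of_nat_diff)
  show ?thesis using r1 r2 r3 mc by linarith
qed

theorem corollary4p5:
  "\<forall>\<epsilon>::real. \<epsilon> > 0 \<longrightarrow> (\<exists>N::nat. \<forall>n \<ge> N. \<forall>(V::nat set) E.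
     simple_graph V E \<and> connected_graph V E \<and> card V = n \<and> E \<noteq> {} \<longrightarrow>
     real (es_Delta V E) \<le> (5/9 + \<epsilon>) * real n)"
proof (intro allI impI)
  fix \<epsilon> :: real assume ep: "\<epsilon> > 0"
  define N where "N = nat \<lceil>1 / \<epsilon>\<rceil>"
  show "\<exists>N::nat. \<forall>n \<ge> N. \<forall>(V::nat set) E.
     simple_graph V E \<and> connected_graph V E \<and> card V = n \<and> E \<noteq> {} \<longrightarrow>
     real (es_Delta V E) \<le> (5/9 + \<epsilon>) * real n"
  proof (intro exI[of _ N] allI impI)
    fix n :: nat and V :: "nat set" and E
    assume n: "n \<ge> N"
    assume h: "simple_graph V E \<and> connected_graph V E \<and> card V = n \<and> E \<noteq> {}"
    have b: "real (es_Delta V E) \<le> 5 / 9 * real n + 1 / 2"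
      using es_bound[of V E] h by simp
    have "real n \<ge> 1 / \<epsilon>"
    proof -
      have "real N \<ge> 1 / \<epsilon>" unfolding N_def by linarith
      then show ?thesis using n by linarith
    qed
    then have "\<epsilon> * real n \<ge> 1" using ep by (simp add: field_simps)
    then show "real (es_Delta V E) \<le> (5/9 + \<epsilon>) * real n" using b by (simp add: algebra_simps)
  qed
qed


end
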